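(* Let $n\geqslant 2^{32}$ be an integer and let $\mathcal{A}\subseteq\{0,1\}^{\binom{[n]}{2}}$ be isomorphic invariant. Then there exists a nonnegative parameter $\gamma(\mathcal{A})$ with \[ \gamma(\mathcal{A})\geqslant\mu(\mathcal{A})^4-\frac{21\sqrt2}{\sqrt{\log_2 n}} \] such that for every $U=\{i<j<k<\ell\}\in\binom{[n]}{4}$, \[ \mathbf{P}\big(W:\ W\cup\{\{i,k\}\},\,W\cup\{\{i,\ell\}\},\,W\cup\{\{j,k\}\},\,W\cup\{\{j,\ell\}\}\in\mathcal{A}\big)=\gamma(\mathcal{A}), \] where $\mathbf{P}$ denotes the uniform probability measure on $\{0,1\}^{\binom{[n]}{2}\setminus\binom{U}{2}}$.
   Context: Graphs on $[n]=\{1,\dots,n\}$ are identified with subsets of $\binom{[n]}{2}$ and subsets of a finite set $I$ with elements of $\{0,1\}^I$. $\mu$ is the uniform probability measure on $\{0,1\}^{\binom{[n]}{2}}$. $\mathcal{A}$ is isomorphic invariant if for every permutation $\pi$ of $[n]$ and every $G\subseteq\binom{[n]}{2}$, $G\in\mathcal{A}$ iff $\{\pi(e):e\in G\}\in\mathcal{A}$. *)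

theory Defs
  imports Complex_Main
begin

definition edges :: "nat \<Rightarrow> nat set set" where
  "edges n = {e. e \<subseteq> {1..n} \<and> card e = 2}"

definition pairs :: "nat set \<Rightarrow> nat set set" where
  "pairs U = {e. e \<subseteq> U \<and> card e = 2}"

definition iso_invariant :: "nat \<Rightarrow> nat set set set \<Rightarrow> bool" where
  "iso_invariant n A \<longleftrightarrow>
     (\<forall>\<pi> G. bij_betw \<pi> {1..n} {1..n} \<longrightarrow> G \<subseteq> edges n \<longrightarrow>
        (G \<in> A \<longleftrightarrow> (\<lambda>e. \<pi> ` e) ` G \<in> A))"

definition mu :: "nat \<Rightarrow> nat set set set \<Rightarrow> real" where
  "mu n A = real (card (A \<inter> Pow (edges n))) / 2 ^ card (edges n)"

definition unif_prob :: "'a set \<Rightarrow> ('a set \<Rightarrow> bool) \<Rightarrow> real" where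
  "unif_prob S P = real (card {W. W \<subseteq> S \<and> P W}) / 2 ^ card S"

end

theory Submission
  imports Defs "HOL-Analysis.Convex"
begin
definition ind :: "bool \<Rightarrow> real" where "ind P = (if P then 1 else 0)"
definition sg :: "nat set set \<Rightarrow> nat \<Rightarrow> nat \<Rightarrow> real" where
  "sg W a b = (if a = b then 0 else if {a,b} \<in> W then 1 else -1)"
definition neX :: "nat set set \<Rightarrow> nat set \<Rightarrow> real" where
  "neX W X = (\<Sum>a\<in>X. \<Sum>b\<in>X. ind (a \<noteq> b \<and> {a,b} \<notin> W))"
definition Qs :: "nat \<Rightarrow> nat set set \<Rightarrow> real" where
  "Qs n W = (\<Sum>b\<in>{1..n}. \<Sum>b'\<in>{1..n}. (\<Sum>a\<in>{1..n}. sg W a b * sg W a b')^2)"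

lemma ind_sg: "ind (a \<noteq> b \<and> {a,b} \<notin> W) = (ind (a\<noteq>b) - sg W a b)/2"
  by (auto simp: ind_def sg_def)

lemma sum_ind_ne: assumes "finite X" "a \<in> X" shows "(\<Sum>b\<in>X. ind (a\<noteq>b)) = real (card X) - 1"
proof -
  have "(\<Sum>b\<in>X. ind (a\<noteq>b)) = ind (a\<noteq>a) + (\<Sum>b\<in>X-{a}. ind (a\<noteq>b))"
    using assms by (simp add: sum.remove)
  also have "(\<Sum>b\<in>X-{a}. ind (a\<noteq>b)) = (\<Sum>b\<in>X-{a}. 1)"
    by (rule sum.cong) (auto simp: ind_def)
  moreover have "card X \<ge> 1" using assms card_0_eq[OF assms(1)] by (cases "card X") auto
  ultimately show ?thesis using assms by (simp add: ind_def of_nat_diff)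
qed

lemma neX_eq: assumes "finite X"
  shows "neX W X = (real (card X)^2 - real (card X))/2 - (\<Sum>a\<in>X. \<Sum>b\<in>X. sg W a b)/2"
proof -
  have "neX W X = (\<Sum>a\<in>X. \<Sum>b\<in>X. (ind (a\<noteq>b) - sg W a b)/2)"
    unfolding neX_def by (simp add: ind_sg)
  also have "\<dots> = (\<Sum>a\<in>X. (\<Sum>b\<in>X. ind (a\<noteq>b)))/2 - (\<Sum>a\<in>X. \<Sum>b\<in>X. sg W a b)/2"
    by (simp add: sum_divide_distrib sum_subtractf diff_divide_distrib)
  also have "(\<Sum>a\<in>X. (\<Sum>b\<in>X. ind (a\<noteq>b))) = (\<Sum>a\<in>X. real (card X) - 1)"
    by (rule sum.cong) (auto simp: sum_ind_ne assms)
  also have "\<dots> = real (card X)^2 - real (card X)"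
    by (simp add: power2_eq_square algebra_simps)
  finally show ?thesis .
qed

lemma S4: assumes "X \<subseteq> {1..n}"
  shows "(\<Sum>a\<in>X. \<Sum>b\<in>X. sg W a b)^4 \<le> real n^4 * Qs n W"
proof -
  define V where "V = {1..n}"
  have finX: "finite X" using assms finite_subset by blast
  have cX: "card X \<le> n" using card_mono[OF _ assms] by simp
  define y where "y a = (\<Sum>b\<in>X. sg W a b)" for a
  define c where "c b b' = (\<Sum>a\<in>V. sg W a b * sg W a b')" for b b'
  define S where "S = (\<Sum>a\<in>X. y a)"
  define Y where "Y = (\<Sum>a\<in>V. (y a)^2)"
  have Y0: "Y \<ge> 0" unfolding Y_def by (simp add: sum_nonneg)
  have h1: "S^2 \<le> (\<Sum>a\<in>X. (y a)^2) * card X"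
    unfolding S_def by (rule sum_squared_le_sum_of_squares)
  have h2: "(\<Sum>a\<in>X. (y a)^2) \<le> Y"
    unfolding Y_def V_def using assms by (intro sum_mono2) auto
  have h12: "S^2 \<le> Y * n"
  proof -
    have "S^2 \<le> (\<Sum>a\<in>X. (y a)^2) * card X" by (rule h1)
    also have "\<dots> \<le> Y * card X" using h2 by (simp add: mult_right_mono)
    also have "\<dots> \<le> Y * n" using Y0 cX by (simp add: mult_left_mono)
    finally show ?thesis .
  qed
  have h3: "Y = (\<Sum>b\<in>X. \<Sum>b'\<in>X. c b b')"
  proof -
    have "Y = (\<Sum>a\<in>V. \<Sum>b\<in>X. \<Sum>b'\<in>X. sg W a b * sg W a b')"
      unfolding Y_def y_def power2_eq_square by (simp add: sum_product)
    also have "\<dots> = (\<Sum>b\<in>X. \<Sum>a\<in>V. \<Sum>b'\<in>X. sg W a b * sg W a b')"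
      by (rule sum.swap)
    also have "\<dots> = (\<Sum>b\<in>X. \<Sum>b'\<in>X. \<Sum>a\<in>V. sg W a b * sg W a b')"
      by (rule sum.cong[OF refl], rule sum.swap)
    finally show ?thesis unfolding c_def .
  qed
  have h4: "Y^2 \<le> real n^2 * Qs n W"
  proof -
    have "Y = (\<Sum>p\<in>X\<times>X. c (fst p) (snd p))"
      unfolding h3 by (simp add: sum.cartesian_product split_def)
    hence "Y^2 \<le> (\<Sum>p\<in>X\<times>X. (c (fst p) (snd p))^2) * card (X\<times>X)"
      using sum_squared_le_sum_of_squares by metis
    also have "(\<Sum>p\<in>X\<times>X. (c (fst p) (snd p))^2) \<le> (\<Sum>p\<in>V\<times>V. (c (fst p) (snd p))^2)"
      using assms unfolding V_def by (intro sum_mono2) auto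
    also have "\<dots> = Qs n W"
      unfolding Qs_def c_def V_def by (simp add: sum.cartesian_product split_def)
    finally have "Y^2 \<le> Qs n W * card (X\<times>X)"
      by (simp add: mult_right_mono)
    moreover have "card (X\<times>X) \<le> n^2" using cX by (simp add: card_cartesian_product power2_eq_square mult_le_mono)
    moreover have "Qs n W \<ge> 0" unfolding Qs_def by (intro sum_nonneg) auto
    ultimately show ?thesis
      by (smt (verit, best) mult_left_mono of_nat_le_iff of_nat_power mult.commute)
  qed
  have "S^4 = (S^2)^2" by simp
  also have "\<dots> \<le> (Y*n)^2" using h12 by (intro power_mono) auto
  also have "\<dots> = Y^2 * n^2" by (simp add: power_mult_distrib)
  also have "\<dots> \<le> (real n^2 * Qs n W) * n^2" using h4 by (intro mult_right_mono) auto
  finally show ?thesis unfolding S_def y_def by (simp add: algebra_simps)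
qed

lemma amgm4: assumes "t \<ge> 0" "(l::real) > 0" shows "t \<le> 3*l/4 + t^4/(4*l^3)"
proof -
  have "t^4 - 4*l^3*t + 3*l^4 = (t-l)^2 * (t^2 + 2*t*l + 3*l^2)" by (simp add: power2_eq_square power3_eq_cube algebra_simps power4_eq_xxxx)
  moreover have "(t-l)^2 * (t^2 + 2*t*l + 3*l^2) \<ge> 0" using assms by (intro mult_nonneg_nonneg) auto
  ultimately have "4*l^3*t \<le> 3*l^4 + t^4" by linarith
  thus ?thesis using assms by (simp add: field_simps power4_eq_xxxx power3_eq_cube)
qed

lemma disc: assumes "X \<subseteq> {1..n}" "(l::real) > 0"
  shows "\<bar>neX W X - real (card X)^2/2\<bar> \<le> n/2 + (3*l/4 + n^4 * Qs n W/(4*l^3))/2"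
proof -
  have finX: "finite X" using assms finite_subset by blast
  have cX: "card X \<le> n" using card_mono[OF _ assms(1)] by simp
  define S where "S = (\<Sum>a\<in>X. \<Sum>b\<in>X. sg W a b)"
  have "\<bar>S\<bar>^4 = S^4" by (simp add: power_abs[symmetric])
  hence s4: "\<bar>S\<bar>^4 \<le> real n^4 * Qs n W" using S4[OF assms(1)] unfolding S_def by simp
  have l3: "4*l^3 > 0" using assms(2) by simp
  have "\<bar>S\<bar> \<le> 3*l/4 + \<bar>S\<bar>^4/(4*l^3)" by (rule amgm4) (use assms in auto)
  also have "\<bar>S\<bar>^4/(4*l^3) \<le> (real n^4 * Qs n W)/(4*l^3)"
    using s4 l3 by (intro divide_right_mono) auto
  finally have sb: "\<bar>S\<bar> \<le> 3*l/4 + (real n^4 * Qs n W)/(4*l^3)" by simp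
  have eq: "neX W X - real (card X)^2/2 = - real (card X)/2 - S/2"
    using neX_eq[OF finX, of W] unfolding S_def by (simp add: diff_divide_distrib)
  have "real (card X) \<le> n" using cX by simp
  hence "\<bar>- real (card X)/2 - S/2\<bar> \<le> n/2 + \<bar>S\<bar>/2" by linarith
  moreover have "\<bar>S\<bar>/2 \<le> (3*l/4 + (real n^4 * Qs n W)/(4*l^3))/2" using sb by simp
  ultimately show ?thesis unfolding eq by (smt (verit))
qed

lemma arith_final:
  fixes N Op D Lp T :: real
  assumes N: "N > 0" and Op: "0 \<le> Op" "Op \<le> N^2" and D: "D \<ge> 0" and Lp: "Lp \<ge> 0"
    "Lp \<ge> Op^2/(2*N) - N*D" "Lp \<le> Op^2/(2*N)"
    and T: "T \<ge> Lp^2/(N^2+2*D) - N^2*D"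
  shows "T \<ge> Op^4/(4*N^4) - 5*N^2*D/2"
proof -
  define y where "y = Op/N^2"
  define d where "d = D/N^2"
  define a where "a = Lp^2/N^6"
  have N2: "N^2 > 0" using N by simp
  have Oy: "Op = y*N^2" unfolding y_def using N by simp
  have Dd: "D = d*N^2" unfolding d_def using N by simp
  have y0: "0 \<le> y" "y \<le> 1" unfolding y_def using Op N2 by (auto simp: divide_le_eq_1)
  have d0: "d \<ge> 0" unfolding d_def using D N2 by simp
  have Lpa: "Lp^2 = a * N^6" unfolding a_def using N by simp
  have L1: "Lp \<ge> N^3*(y^2/2 - d)"
  proof -
    have "Op^2/(2*N) - N*D = N^3*(y^2/2 - d)" unfolding Oy Dd using N
      by (simp add: field_simps power2_eq_square power3_eq_cube)
    thus ?thesis using Lp(2) by simp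
  qed
  have L2: "Lp \<le> N^3*(y^2/2)"
  proof -
    have "Op^2/(2*N) = N^3*(y^2/2)" unfolding Oy using N
      by (simp add: field_simps power2_eq_square power3_eq_cube)
    thus ?thesis using Lp(3) by simp
  qed
  have N3: "N^3 > 0" using N by simp
  have alow: "a \<ge> y^4/4 - d"
  proof (cases "y^2/2 \<ge> d")
    case True
    hence "0 \<le> N^3*(y^2/2 - d)" using N3 by simp
    hence "(N^3*(y^2/2 - d))^2 \<le> Lp^2" using L1 by (intro power_mono) auto
    hence "N^6 * (y^2/2 - d)^2 \<le> a * N^6" unfolding Lpa by (simp add: power_mult_distrib power_mult[symmetric])
    hence "(y^2/2 - d)^2 \<le> a" using N by (simp add: mult.commute)
    moreover have "(y^2/2 - d)^2 \<ge> y^4/4 - d"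
    proof -
      have "(y^2/2 - d)^2 = y^4/4 - y^2*d + d^2" by (simp add: power2_eq_square power4_eq_xxxx algebra_simps)
      moreover have "y^2*d \<le> d" using y0 d0 by (simp add: mult_left_le_one_le power_le_one mult_le_cancel_right1)
      ultimately show ?thesis by (smt (verit) zero_le_power2)
    qed
    ultimately show ?thesis by linarith
  next
    case False
    have "a \<ge> 0" unfolding a_def using N by simp
    moreover have "y^4/4 \<le> d"
    proof -
      have "y^4/4 = (y^2/2)*(y^2/2)" by (simp add: power4_eq_xxxx power2_eq_square)
      also have "\<dots> \<le> (y^2/2) * 1" using y0 power_le_one[of y 2] by (intro mult_left_mono) auto
      finally show ?thesis using False by simp
    qed
    ultimately show ?thesis by linarith
  qed
  have ahigh: "a \<le> 1/4"
  proof -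
    have "Lp^2 \<le> (N^3*(y^2/2))^2" using L2 Lp(1) by (intro power_mono) auto
    moreover have "(N^3*(y^2/2))^2 = N^6 * (y^2/2)^2" by (simp add: field_simps eval_nat_numeral)
    ultimately have "a * N^6 \<le> N^6 * (y^2/2)^2" unfolding Lpa by simp
    hence "a \<le> (y^2/2)^2" using N by (simp add: mult.commute)
    moreover have "(y^2/2)^2 \<le> 1/4" using y0 by (simp add: power_le_one power2_eq_square power_divide)
      (metis mult_le_one power2_eq_square power_le_one zero_le_power2)
    ultimately show ?thesis by linarith
  qed
  have a0: "a \<ge> 0" unfolding a_def using N by simp
  have frac: "Lp^2/(N^2+2*D) = N^4 * (a/(1+2*d))"
  proof -
    have e1: "N^2+2*D = N^2*(1+2*d)" unfolding Dd by (simp add: algebra_simps)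
    have "1+2*d \<noteq> 0" using d0 by linarith
    have e2: "a*N^6 = (N^4*a)*N^2" by (simp add: eval_nat_numeral)
    have "(N^4*a)*N^2/(N^2*(1+2*d)) = (N^4*a)/(1+2*d)" using N2 by (simp add: mult.commute)
    thus ?thesis unfolding Lpa e1 e2 by simp
  qed
  have "a/(1+2*d) \<ge> a - d/2"
  proof -
    have "(a - d/2)*(1+2*d) = a + 2*a*d - d/2 - d^2" by (simp add: algebra_simps power2_eq_square)
    also have "\<dots> \<le> a"
    proof -
      have "a*d \<le> (1/4)*d" using ahigh d0 by (intro mult_right_mono) auto
      moreover have "d^2 \<ge> 0" by simp
      ultimately show ?thesis by linarith
    qed
    finally show ?thesis using d0 by (simp add: le_divide_eq)
  qed
  hence "Lp^2/(N^2+2*D) \<ge> N^4*(a - d/2)" unfolding frac using N by (intro mult_left_mono) auto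
  hence "T \<ge> N^4*(a - d/2) - N^2*D" using T by linarith
  also have "N^4*(a - d/2) - N^2*D \<ge> N^4*(y^4/4 - 5*d/2)"
  proof -
    have "N^2*D = N^4*d" unfolding Dd by (simp add: power4_eq_xxxx power2_eq_square)
    moreover have "N^4*(y^4/4 - 5*d/2) \<le> N^4*(a - d/2 - d)" using alow N by (intro mult_left_mono) auto
    ultimately show ?thesis by (simp add: algebra_simps)
  qed
  moreover have "N^4*(y^4/4 - 5*d/2) = Op^4/(4*N^4) - 5*N^2*D/2"
  proof -
    have "Op^4 = (y^4*N^4)*N^4" unfolding Oy by (simp add: power_mult_distrib power_mult[symmetric])
    hence "Op^4/(4*N^4) = y^4*N^4/4" using N by simp
    moreover have "N^2*D = d*N^4" unfolding Dd by (simp add: eval_nat_numeral)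
    ultimately show ?thesis by (simp add: algebra_simps)
  qed
  ultimately show ?thesis by linarith
qed

definition nonE :: "nat set set \<Rightarrow> nat \<Rightarrow> nat \<Rightarrow> bool" where
  "nonE W x y \<longleftrightarrow> x \<noteq> y \<and> {x,y} \<notin> W"
definition inF :: "nat set set set \<Rightarrow> nat set set \<Rightarrow> nat \<Rightarrow> nat \<Rightarrow> bool" where
  "inF A W x y \<longleftrightarrow> x \<noteq> y \<and> {x,y} \<notin> W \<and> insert {x,y} W \<in> A"
definition Good :: "nat set set set \<Rightarrow> nat set set \<Rightarrow> nat \<Rightarrow> nat \<Rightarrow> nat \<Rightarrow> nat \<Rightarrow> bool" where
  "Good A W a b c d \<longleftrightarrow> nonE W a b \<and> nonE W c d \<and> inF A W a c \<and> inF A W a d \<and> inF A W b c \<and> inF A W b d"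
definition TT :: "nat \<Rightarrow> nat set set set \<Rightarrow> nat set set \<Rightarrow> real" where
  "TT n A W = (\<Sum>a\<in>{1..n}. \<Sum>b\<in>{1..n}. \<Sum>c\<in>{1..n}. \<Sum>d\<in>{1..n}. ind (Good A W a b c d))"
definition opF :: "nat \<Rightarrow> nat set set set \<Rightarrow> nat set set \<Rightarrow> real" where
  "opF n A W = (\<Sum>a\<in>{1..n}. \<Sum>c\<in>{1..n}. ind (inF A W a c))"

lemma ind_conj: "ind (P \<and> Q) = ind P * ind Q" by (simp add: ind_def)
lemma ind_ge0: "ind P \<ge> 0" and ind_le1: "ind P \<le> 1" and ind_sq: "ind P * ind P = ind P"
  by (auto simp: ind_def)

lemma sum_filter_ind: "finite V \<Longrightarrow> (\<Sum>a\<in>{a\<in>V. P a}. (f a::real)) = (\<Sum>a\<in>V. ind (P a) * f a)"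
  by (simp add: sum.inter_filter, rule sum.cong, auto simp: ind_def)

lemma card_filter_ind: "finite V \<Longrightarrow> real (card {a\<in>V. P a}) = (\<Sum>a\<in>V. ind (P a))"
  using sum_filter_ind[where V=V and P=P and f="\<lambda>_. 1::real"] by simp

lemma neX_filter: "finite V \<Longrightarrow> neX W {a\<in>V. P a} = (\<Sum>a\<in>V. \<Sum>b\<in>V. ind (P a) * ind (P b) * ind (nonE W a b))"
  unfolding neX_def nonE_def
  by (simp add: sum_filter_ind sum_distrib_left mult.assoc)

lemma swap4: "(\<Sum>c\<in>V. \<Sum>d\<in>V. \<Sum>a\<in>V. \<Sum>b\<in>V. f a b c d) = (\<Sum>a\<in>V. \<Sum>b\<in>V. \<Sum>c\<in>V. \<Sum>d\<in>V. (f a b c d :: real))"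
proof -
  have "(\<Sum>c\<in>V. \<Sum>d\<in>V. \<Sum>a\<in>V. \<Sum>b\<in>V. f a b c d) = (\<Sum>c\<in>V. \<Sum>a\<in>V. \<Sum>d\<in>V. \<Sum>b\<in>V. f a b c d)"
    by (rule sum.cong[OF refl], rule sum.swap)
  also have "\<dots> = (\<Sum>c\<in>V. \<Sum>a\<in>V. \<Sum>b\<in>V. \<Sum>d\<in>V. f a b c d)"
    by (rule sum.cong[OF refl], rule sum.cong[OF refl], rule sum.swap)
  also have "\<dots> = (\<Sum>a\<in>V. \<Sum>c\<in>V. \<Sum>b\<in>V. \<Sum>d\<in>V. f a b c d)"
    by (rule sum.swap)
  also have "\<dots> = (\<Sum>a\<in>V. \<Sum>b\<in>V. \<Sum>c\<in>V. \<Sum>d\<in>V. f a b c d)"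
    by (rule sum.cong[OF refl], rule sum.swap)
  finally show ?thesis .
qed

lemma swap3: "(\<Sum>c\<in>V. \<Sum>d\<in>V. \<Sum>a\<in>V. f a c d) = (\<Sum>a\<in>V. \<Sum>c\<in>V. \<Sum>d\<in>V. (f a c d :: real))"
proof -
  have "(\<Sum>c\<in>V. \<Sum>d\<in>V. \<Sum>a\<in>V. f a c d) = (\<Sum>c\<in>V. \<Sum>a\<in>V. \<Sum>d\<in>V. f a c d)"
    by (rule sum.cong[OF refl], rule sum.swap)
  also have "\<dots> = (\<Sum>a\<in>V. \<Sum>c\<in>V. \<Sum>d\<in>V. f a c d)"
    by (rule sum.swap)
  finally show ?thesis .
qed

lemma TT_eq: "TT n A W = (\<Sum>c\<in>{1..n}. \<Sum>d\<in>{1..n}. ind (nonE W c d) *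
     neX W {a\<in>{1..n}. inF A W a c \<and> inF A W a d})"
proof -
  let ?V = "{1..n}"
  have "(\<Sum>c\<in>?V. \<Sum>d\<in>?V. ind (nonE W c d) * neX W {a\<in>?V. inF A W a c \<and> inF A W a d})
     = (\<Sum>c\<in>?V. \<Sum>d\<in>?V. \<Sum>a\<in>?V. \<Sum>b\<in>?V. ind (Good A W a b c d))"
    by (simp only: neX_filter[OF finite_atLeastAtMost]) (simp add: sum_distrib_left Good_def ind_conj mult_ac)
  also have "\<dots> = TT n A W" unfolding TT_def by (rule swap4)
  finally show ?thesis by simp
qed

lemma Z_eq: "(\<Sum>c\<in>{1..n}. \<Sum>d\<in>{1..n}. ind (nonE W c d) *
     real (card {a\<in>{1..n}. inF A W a c \<and> inF A W a d}))
   = (\<Sum>a\<in>{1..n}. neX W {c\<in>{1..n}. inF A W a c})"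
proof -
  let ?V = "{1..n}"
  have "(\<Sum>c\<in>?V. \<Sum>d\<in>?V. ind (nonE W c d) * real (card {a\<in>?V. inF A W a c \<and> inF A W a d}))
     = (\<Sum>c\<in>?V. \<Sum>d\<in>?V. \<Sum>a\<in>?V. ind (inF A W a c) * ind (inF A W a d) * ind (nonE W c d))"
    by (simp only: card_filter_ind[OF finite_atLeastAtMost]) (simp add: sum_distrib_left ind_conj mult_ac)
  also have "\<dots> = (\<Sum>a\<in>?V. \<Sum>c\<in>?V. \<Sum>d\<in>?V. ind (inF A W a c) * ind (inF A W a d) * ind (nonE W c d))"
    by (rule swap3)
  also have "\<dots> = (\<Sum>a\<in>?V. neX W {c\<in>?V. inF A W a c})"
    by (simp only: neX_filter[OF finite_atLeastAtMost])
  finally show ?thesis .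
qed

lemma opF_eq: "opF n A W = (\<Sum>a\<in>{1..n}. real (card {c\<in>{1..n}. inF A W a c}))"
  unfolding opF_def by (simp only: card_filter_ind[OF finite_atLeastAtMost])


lemma perW:
  assumes n1: "n \<ge> 1" and Dl: "Dl \<ge> 0"
    and H: "\<And>X. X \<subseteq> {1..n} \<Longrightarrow> \<bar>neX W X - real (card X)^2/2\<bar> \<le> Dl"
  shows "TT n A W \<ge> opF n A W ^4/(4*real n^4) - 5*real n^2*Dl/2"
proof -
  define V where "V = {1..n}"
  have finV: "finite V" unfolding V_def by simp
  have cardV: "card V = n" unfolding V_def by simp
  define R where "R c d = {a\<in>V. inF A W a c \<and> inF A W a d}" for c d
  define Qa where "Qa a = {c\<in>V. inF A W a c}" for a
  define f where "f p = ind (nonE W (fst p) (snd p))" for p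
  define g where "g p = real (card (R (fst p) (snd p)))" for p
  define Z where "Z = (\<Sum>p\<in>V\<times>V. f p * g p)"
  define Op where "Op = opF n A W"
  have TTp: "TT n A W = (\<Sum>p\<in>V\<times>V. f p * neX W (R (fst p) (snd p)))"
    unfolding TT_eq by (simp add: sum.cartesian_product f_def R_def split_def V_def)
  have Zq: "Z = (\<Sum>a\<in>V. neX W (Qa a))"
    unfolding Z_def using Z_eq[where n=n and W=W and A=A] by (simp add: sum.cartesian_product f_def g_def R_def Qa_def split_def V_def)
  have opq: "Op = (\<Sum>a\<in>V. real (card (Qa a)))" unfolding Op_def opF_eq Qa_def V_def ..
  have Hl: "real (card X)^2/2 - Dl \<le> neX W X" if "X \<subseteq> {1..n}" for X
    using H[OF that] by (simp add: abs_le_iff)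
  have Hu: "neX W X \<le> real (card X)^2/2 + Dl" if "X \<subseteq> {1..n}" for X
    using H[OF that] by (simp add: abs_le_iff)
  have QaV: "Qa a \<subseteq> {1..n}" for a unfolding Qa_def V_def by auto
  have RV: "R c d \<subseteq> {1..n}" for c d unfolding R_def V_def by auto
  have "Z \<ge> (\<Sum>a\<in>V. real (card (Qa a))^2/2 - Dl)"
    unfolding Zq using Hl[OF QaV] by (intro sum_mono) auto
  also have "(\<Sum>a\<in>V. real (card (Qa a))^2/2 - Dl) = (\<Sum>a\<in>V. real (card (Qa a))^2)/2 - n*Dl"
    by (simp add: sum_subtractf sum_divide_distrib cardV)
  finally have Z1: "Z \<ge> (\<Sum>a\<in>V. real (card (Qa a))^2)/2 - n*Dl" .
  have "Op^2 \<le> (\<Sum>a\<in>V. real (card (Qa a))^2) * n"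
    unfolding opq using sum_squared_le_sum_of_squares[of "\<lambda>a. real (card (Qa a))" V] by (simp add: cardV)
  hence "Op^2/(2*n) \<le> (\<Sum>a\<in>V. real (card (Qa a))^2)/2" using n1 by (simp add: field_simps)
  hence ZL: "Z \<ge> Op^2/(2*n) - n*Dl" using Z1 by linarith
  have Z0: "Z \<ge> 0" unfolding Z_def f_def g_def by (intro sum_nonneg mult_nonneg_nonneg) (auto simp: ind_ge0)
  define Lp where "Lp = max (Op^2/(2*n) - n*Dl) 0"
  have Lp0: "Lp \<ge> 0" "Lp \<ge> Op^2/(2*n) - n*Dl" unfolding Lp_def by auto
  have LpZ: "Lp \<le> Z" unfolding Lp_def using ZL Z0 by simp
  have Lpu: "Lp \<le> Op^2/(2*n)" unfolding Lp_def using Dl n1 by auto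
  have O0: "Op \<ge> 0" unfolding Op_def opF_def by (intro sum_nonneg) (auto simp: ind_ge0)
  have On: "Op \<le> real n^2"
  proof -
    have "Op \<le> (\<Sum>a\<in>V. \<Sum>c\<in>V. 1)" unfolding Op_def opF_def V_def by (intro sum_mono) (auto simp: ind_le1)
    thus ?thesis by (simp add: cardV power2_eq_square)
  qed
  define Sf where "Sf = (\<Sum>p\<in>V\<times>V. f p)"
  have Sfe: "Sf = neX W V" unfolding Sf_def neX_def f_def nonE_def by (simp add: sum.cartesian_product split_def)
  have Sf1: "Sf \<le> real n^2/2 + Dl" using Hu[of V] unfolding Sfe using cardV by (simp add: V_def)
  have Sf2: "Sf \<le> real n^2"
  proof -
    have "Sf \<le> (\<Sum>p\<in>V\<times>V. 1)" unfolding Sf_def f_def by (intro sum_mono) (auto simp: ind_le1)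
    thus ?thesis by (simp add: cardV card_cartesian_product power2_eq_square)
  qed
  define Sg where "Sg = (\<Sum>p\<in>V\<times>V. f p * (g p)^2)"
  have Sg0: "Sg \<ge> 0" unfolding Sg_def f_def by (intro sum_nonneg mult_nonneg_nonneg) (auto simp: ind_ge0)
  have CS: "Z^2 \<le> Sg * Sf"
  proof -
    have "(\<Sum>p\<in>V\<times>V. (f p * g p) * f p)^2 \<le> (\<Sum>p\<in>V\<times>V. (f p * g p)^2) * (\<Sum>p\<in>V\<times>V. (f p)^2)"
      by (rule Cauchy_Schwarz_ineq_sum)
    moreover have "(\<Sum>p\<in>V\<times>V. (f p * g p) * f p) = Z" unfolding Z_def f_def
      by (intro sum.cong refl) (simp add: ind_def)
    moreover have "(\<Sum>p\<in>V\<times>V. (f p * g p)^2) = Sg" unfolding Sg_def f_def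
      by (intro sum.cong refl) (simp add: ind_def)
    moreover have "(\<Sum>p\<in>V\<times>V. (f p)^2) = Sf" unfolding Sf_def f_def
      by (intro sum.cong refl) (simp add: ind_def)
    ultimately show ?thesis by simp
  qed
  have "Lp^2 \<le> Z^2" using Lp0 LpZ by (intro power_mono) auto
  also have "\<dots> \<le> Sg * (real n^2/2 + Dl)" using CS mult_left_mono[OF Sf1 Sg0] by linarith
  finally have L2: "Lp^2 \<le> Sg * (real n^2/2 + Dl)" .
  have "real n^2 > 0" using n1 by simp
  hence nD: "real n^2 + 2*Dl > 0" using Dl by linarith
  have L3: "Lp^2/(real n^2 + 2*Dl) \<le> Sg/2"
  proof -
    have "Lp^2 \<le> (Sg/2) * (real n^2 + 2*Dl)" using L2 by (simp add: algebra_simps)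
    thus ?thesis using nD by (simp add: divide_le_eq)
  qed
  have "TT n A W \<ge> (\<Sum>p\<in>V\<times>V. f p * ((g p)^2/2 - Dl))"
    unfolding TTp
  proof (intro sum_mono mult_left_mono)
    fix p assume "p \<in> V\<times>V"
    show "(g p)^2/2 - Dl \<le> neX W (R (fst p) (snd p))" using Hl[OF RV] unfolding g_def by simp
    show "0 \<le> f p" unfolding f_def by (rule ind_ge0)
  qed
  also have "(\<Sum>p\<in>V\<times>V. f p * ((g p)^2/2 - Dl)) = Sg/2 - Dl * Sf"
    unfolding Sg_def Sf_def by (simp add: algebra_simps sum_subtractf sum_distrib_left sum_divide_distrib)
  finally have "TT n A W \<ge> Sg/2 - Dl*Sf" .
  moreover have "Dl * Sf \<le> Dl * real n^2" using Sf2 Dl by (intro mult_left_mono) auto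
  ultimately have "TT n A W \<ge> Lp^2/(real n^2 + 2*Dl) - real n^2 * Dl" using L3 by (simp add: algebra_simps)
  hence "TT n A W \<ge> Op^4/(4*real n^4) - 5*real n^2*Dl/2"
    using arith_final[of "real n" Op Dl Lp "TT n A W"] n1 O0 On Dl Lp0 Lpu by simp
  thus ?thesis unfolding Op_def .
qed

lemma finite_edges: "finite (edges n)"
  unfolding edges_def by (rule finite_subset[of _ "Pow {1..n}"]) auto

lemma pair_in_edges: "{a,b} \<in> edges n \<longleftrightarrow> a \<noteq> b \<and> a \<in> {1..n} \<and> b \<in> {1..n}"
  unfolding edges_def by (auto simp: card_insert_if)

lemma orth:
  assumes fin: "finite E" and e: "e \<in> E" and g: "\<And>W. g (insert e W) = g (W - {e})"
  shows "(\<Sum>W\<in>Pow E. (if e \<in> W then 1 else -1) * g W) = (0::real)"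
proof -
  define P1 where "P1 = {W\<in>Pow E. e \<in> W}"
  define P0 where "P0 = {W\<in>Pow E. e \<notin> W}"
  have un: "Pow E = P1 \<union> P0" "P1 \<inter> P0 = {}" unfolding P1_def P0_def by auto
  have fP: "finite P1" "finite P0" unfolding P1_def P0_def using fin by auto
  have "(\<Sum>W\<in>Pow E. (if e \<in> W then 1 else -1) * g W) =
        (\<Sum>W\<in>P1. (if e \<in> W then 1 else -1) * g W) + (\<Sum>W\<in>P0. (if e \<in> W then 1 else -1) * g W)"
    unfolding un(1) by (rule sum.union_disjoint[OF fP un(2)])
  also have "(\<Sum>W\<in>P1. (if e \<in> W then 1 else -1) * g W) = (\<Sum>W\<in>P1. g W)"
    unfolding P1_def by (rule sum.cong) auto
  also have "(\<Sum>W\<in>P0. (if e \<in> W then 1 else -1) * g W) = - (\<Sum>W\<in>P0. g W)"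
    unfolding P0_def by (simp add: sum_negf[symmetric])
  also have "P1 = insert e ` P0"
  proof
    show "P1 \<subseteq> insert e ` P0"
    proof
      fix W assume "W \<in> P1"
      hence "W = insert e (W - {e})" "W - {e} \<in> P0" unfolding P1_def P0_def by auto
      thus "W \<in> insert e ` P0" by blast
    qed
    show "insert e ` P0 \<subseteq> P1" unfolding P1_def P0_def using e by auto
  qed
  also have "(\<Sum>W\<in>insert e ` P0. g W) = (\<Sum>W\<in>P0. g (insert e W))"
  proof -
    have "inj_on (insert e) P0" unfolding inj_on_def P0_def by (metis Diff_insert_absorb mem_Collect_eq)
    thus ?thesis using sum.reindex[of "insert e" P0 g] by (simp add: comp_def)
  qed
  also have "\<dots> = (\<Sum>W\<in>P0. g W)"
    by (rule sum.cong[OF refl]) (simp add: g P0_def)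
  finally show ?thesis by simp
qed

lemma sg_ins: "{x,y} \<noteq> e \<Longrightarrow> sg (insert e W) x y = sg (W - {e}) x y"
  unfolding sg_def by auto

lemma sg_edge: "a \<noteq> b \<Longrightarrow> sg W a b = (if {a,b} \<in> W then 1 else -1)"
  unfolding sg_def by simp

lemma four:
  assumes V: "a \<in> {1..n}" "b \<in> {1..n}" "a' \<in> {1..n}" "b' \<in> {1..n}" and ne: "a \<noteq> a'" "b \<noteq> b'"
  shows "(\<Sum>W\<in>Pow (edges n). sg W a b * sg W a b' * sg W a' b * sg W a' b') = 0"
proof (cases "a = b \<or> a = b' \<or> a' = b \<or> a' = b'")
  case True
  show ?thesis by (rule sum.neutral) (use True in \<open>auto simp: sg_def\<close>)
next
  case False
  define e where "e = {a,b}"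
  have eE: "e \<in> edges n" unfolding e_def pair_in_edges using False V by auto
  have d1: "{a,b'} \<noteq> e" "{a',b} \<noteq> e" "{a',b'} \<noteq> e" unfolding e_def using False ne by (auto simp: doubleton_eq_iff)
  have o: "(\<Sum>W\<in>Pow (edges n). (if e \<in> W then 1 else -1) * (sg W a b' * sg W a' b * sg W a' b')) = 0"
    by (rule orth[OF finite_edges eE]) (simp add: sg_ins d1)
  have p: "sg W a b * sg W a b' * sg W a' b * sg W a' b' = (if e \<in> W then 1 else -1) * (sg W a b' * sg W a' b * sg W a' b')" for W
    using False unfolding e_def by (simp add: sg_edge mult_ac)
  have "(\<Sum>W\<in>Pow (edges n). sg W a b * sg W a b' * sg W a' b * sg W a' b') = (\<Sum>W\<in>Pow (edges n). (if e \<in> W then 1 else -1) * (sg W a b' * sg W a' b * sg W a' b'))"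
    by (rule sum.cong[OF refl], rule p)
  with o show ?thesis by simp
qed

lemma two:
  assumes V: "a \<in> {1..n}" "c \<in> {1..n}" "a' \<in> {1..n}" "c' \<in> {1..n}" and ne: "{a,c} \<noteq> {a',c'}"
  shows "(\<Sum>W\<in>Pow (edges n). sg W a c * sg W a' c') = 0"
proof (cases "a = c")
  case True thus ?thesis by (simp add: sg_def)
next
  case False
  define e where "e = {a,c}"
  have eE: "e \<in> edges n" unfolding e_def pair_in_edges using False V by auto
  have "(\<Sum>W\<in>Pow (edges n). (if e \<in> W then 1 else -1) * sg W a' c') = 0"
    by (rule orth[OF finite_edges eE]) (use ne e_def in \<open>simp add: sg_ins\<close>)
  thus ?thesis using False unfolding e_def by (simp add: sg_edge)
qed

lemma sg_abs: "\<bar>sg W a b\<bar> \<le> 1" unfolding sg_def by auto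

lemma sum_ind_eq: "a \<in> V \<Longrightarrow> finite V \<Longrightarrow> (\<Sum>a'\<in>V. ind (a = a')) = 1"
  unfolding ind_def by simp

lemma Qs_avg: "(\<Sum>W\<in>Pow (edges n). Qs n W) \<le> 2^card (edges n) * (2 * real n^3)"
proof -
  let ?V = "{1..n}" and ?P = "Pow (edges n)"
  define K where "K = (2::real)^card (edges n)"
  have cP: "real (card ?P) = K" unfolding K_def using finite_edges by (simp add: card_Pow)
  define t where "t W a a' b b' = sg W a b * sg W a b' * sg W a' b * sg W a' b'" for W a a' b b'
  have Qe: "Qs n W = (\<Sum>b\<in>?V. \<Sum>b'\<in>?V. \<Sum>a\<in>?V. \<Sum>a'\<in>?V. t W a a' b b')" for W
    unfolding Qs_def t_def power2_eq_square by (simp add: sum_product mult_ac)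
  have "(\<Sum>W\<in>?P. Qs n W) = (\<Sum>b\<in>?V. \<Sum>b'\<in>?V. \<Sum>a\<in>?V. \<Sum>a'\<in>?V. \<Sum>W\<in>?P. t W a a' b b')"
    unfolding Qe by (simp add: sum.swap[of _ ?P])
  also have "\<dots> \<le> (\<Sum>b\<in>?V. \<Sum>b'\<in>?V. \<Sum>a\<in>?V. \<Sum>a'\<in>?V. K * (ind (a = a') + ind (b = b')))"
  proof (intro sum_mono)
    fix b b' a a' assume V: "b \<in> ?V" "b' \<in> ?V" "a \<in> ?V" "a' \<in> ?V"
    show "(\<Sum>W\<in>?P. t W a a' b b') \<le> K * (ind (a = a') + ind (b = b'))"
    proof (cases "a = a' \<or> b = b'")
      case True
      have "(\<Sum>W\<in>?P. t W a a' b b') \<le> (\<Sum>W\<in>?P. 1)"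
      proof (intro sum_mono)
        fix W
        have "\<bar>t W a a' b b'\<bar> \<le> 1" unfolding t_def abs_mult
          using sg_abs[of W] by (intro mult_le_one) (auto intro: mult_le_one)
        thus "t W a a' b b' \<le> 1" by simp
      qed
      also have "\<dots> = K" using cP by simp
      also have "K \<le> K * (ind (a = a') + ind (b = b'))" using True unfolding K_def ind_def by auto
      finally show ?thesis .
    next
      case False
      hence "(\<Sum>W\<in>?P. t W a a' b b') = 0" unfolding t_def using four[OF V(3,1,4,2)] by simp
      moreover have "K \<ge> 0" unfolding K_def by simp
      ultimately show ?thesis by (simp add: ind_def)
    qed
  qed
  also have "\<dots> = K * (2 * real n^3)"
  proof -
    have s1: "(\<Sum>a'\<in>?V. K * (ind (a = a') + ind (b = b'))) = K + K * real n * ind (b = b')" if "a \<in> ?V" for a b b'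
    proof -
      have "(\<Sum>a'\<in>?V. K * (ind (a = a') + ind (b = b'))) = K * (\<Sum>a'\<in>?V. ind (a = a')) + K * (\<Sum>a'\<in>?V. ind (b = b'))"
        by (simp add: distrib_left sum.distrib sum_distrib_left)
      thus ?thesis using sum_ind_eq[OF that] by simp
    qed
    have s2: "(\<Sum>a\<in>?V. \<Sum>a'\<in>?V. K * (ind (a = a') + ind (b = b'))) = K * real n + K * real n * real n * ind (b = b')" for b b'
    proof -
      have "(\<Sum>a\<in>?V. \<Sum>a'\<in>?V. K * (ind (a = a') + ind (b = b'))) = (\<Sum>a\<in>?V. K + K * real n * ind (b = b'))"
        by (rule sum.cong[OF refl]) (rule s1)
      thus ?thesis by (simp add: algebra_simps)
    qed
    have s3: "(\<Sum>b'\<in>?V. K * real n + K * real n * real n * ind (b = b')) = 2 * K * real n^2" if "b \<in> ?V" for b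
    proof -
      have "(\<Sum>b'\<in>?V. K * real n + K * real n * real n * ind (b = b')) = K * real n * real n + K * real n * real n * (\<Sum>b'\<in>?V. ind (b = b'))"
        by (simp add: sum.distrib sum_distrib_left)
      thus ?thesis using sum_ind_eq[OF that] by (simp add: power2_eq_square)
    qed
    have "(\<Sum>b\<in>?V. \<Sum>b'\<in>?V. \<Sum>a\<in>?V. \<Sum>a'\<in>?V. K * (ind (a = a') + ind (b = b'))) = (\<Sum>b\<in>?V. 2 * K * real n^2)"
      by (intro sum.cong refl) (simp only: s2 s3)
    thus ?thesis by (simp add: power2_eq_square power3_eq_cube)
  qed
  finally show ?thesis unfolding K_def .
qed


lemma card_filter_ind': "finite P \<Longrightarrow> (\<Sum>W\<in>P. ind (Q W)) = real (card {W\<in>P. Q W})"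
  using card_filter_ind[of P Q] by simp

lemma count_edge:
  assumes AE: "A \<subseteq> Pow (edges n)" and eE: "e \<in> edges n"
  shows "card {W\<in>Pow (edges n). e \<notin> W \<and> insert e W \<in> A} = card {G\<in>A. e \<in> G}"
proof -
  let ?S = "{W\<in>Pow (edges n). e \<notin> W \<and> insert e W \<in> A}"
  have inj: "inj_on (insert e) ?S" unfolding inj_on_def by (metis (no_types, lifting) Diff_insert_absorb mem_Collect_eq)
  have im: "insert e ` ?S = {G\<in>A. e \<in> G}"
  proof
    show "insert e ` ?S \<subseteq> {G\<in>A. e \<in> G}" by auto
    show "{G\<in>A. e \<in> G} \<subseteq> insert e ` ?S"
    proof
      fix G assume G: "G \<in> {G\<in>A. e \<in> G}"
      hence "G = insert e (G - {e})" "G - {e} \<in> ?S" using AE by (auto simp: insert_absorb)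
      thus "G \<in> insert e ` ?S" by blast
    qed
  qed
  show ?thesis using card_image[OF inj] im by simp
qed

lemma sum_ind_eq2: "a \<in> V \<Longrightarrow> finite V \<Longrightarrow> (\<Sum>a'\<in>V. ind (a' = a)) = 1"
  unfolding ind_def by simp

lemma opF_avg:
  assumes AE: "A \<subseteq> Pow (edges n)"
  shows "(\<Sum>W\<in>Pow (edges n). opF n A W) \<ge> real (card A) * (real n * (real n - 1))/2 - 2^card (edges n) * real n"
proof -
  let ?V = "{1..n}" and ?P = "Pow (edges n)"
  define K where "K = (2::real)^card (edges n)"
  have cP: "real (card ?P) = K" unfolding K_def using finite_edges by (simp add: card_Pow)
  have finA: "finite A" using AE finite_edges finite_subset by blast
  have step1: "(\<Sum>W\<in>?P. ind (inF A W a c)) = (\<Sum>G\<in>A. ind (a \<noteq> c \<and> {a,c} \<in> G))" if V: "a \<in> ?V" "c \<in> ?V" for a c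
  proof (cases "a = c")
    case True thus ?thesis by (simp add: inF_def ind_def)
  next
    case False
    have eE: "{a,c} \<in> edges n" using False V by (simp add: pair_in_edges)
    have "(\<Sum>W\<in>?P. ind (inF A W a c)) = real (card {W\<in>?P. {a,c} \<notin> W \<and> insert {a,c} W \<in> A})"
      using card_filter_ind'[of ?P] finite_edges False by (simp add: inF_def)
    also have "\<dots> = real (card {G\<in>A. {a,c} \<in> G})" using count_edge[OF AE eE] by simp
    also have "\<dots> = (\<Sum>G\<in>A. ind (a \<noteq> c \<and> {a,c} \<in> G))" using card_filter_ind'[OF finA] False by simp
    finally show ?thesis .
  qed
  define dev where "dev G = (\<Sum>a\<in>?V. \<Sum>c\<in>?V. sg G a c)" for G
  have opG: "(\<Sum>a\<in>?V. \<Sum>c\<in>?V. ind (a \<noteq> c \<and> {a,c} \<in> G)) = real n * (real n - 1)/2 + dev G/2" for G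
  proof -
    have "(\<Sum>a\<in>?V. \<Sum>c\<in>?V. ind (a \<noteq> c \<and> {a,c} \<in> G)) = (\<Sum>a\<in>?V. \<Sum>c\<in>?V. (ind (a \<noteq> c) + sg G a c)/2)"
      by (intro sum.cong refl) (auto simp: ind_def sg_def)
    also have "\<dots> = (\<Sum>a\<in>?V. \<Sum>c\<in>?V. ind (a \<noteq> c))/2 + dev G/2"
      unfolding dev_def by (simp add: sum.distrib add_divide_distrib sum_divide_distrib)
    also have "(\<Sum>a\<in>?V. \<Sum>c\<in>?V. ind (a \<noteq> c)) = (\<Sum>a\<in>?V. real n - 1)"
      by (intro sum.cong refl) (simp add: sum_ind_ne)
    finally show ?thesis by simp
  qed
  have "(\<Sum>W\<in>?P. opF n A W) = (\<Sum>a\<in>?V. \<Sum>c\<in>?V. \<Sum>W\<in>?P. ind (inF A W a c))"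
    unfolding opF_def by (simp add: sum.swap[of _ ?P])
  also have "\<dots> = (\<Sum>a\<in>?V. \<Sum>c\<in>?V. \<Sum>G\<in>A. ind (a \<noteq> c \<and> {a,c} \<in> G))"
    by (rule sum.cong[OF refl], rule sum.cong[OF refl], rule step1) auto
  also have "\<dots> = (\<Sum>G\<in>A. \<Sum>a\<in>?V. \<Sum>c\<in>?V. ind (a \<noteq> c \<and> {a,c} \<in> G))"
    by (simp add: sum.swap[of _ A])
  also have "\<dots> = (\<Sum>G\<in>A. real n * (real n - 1)/2 + dev G/2)" by (rule sum.cong[OF refl], rule opG)
  also have "\<dots> = real (card A) * (real n * (real n - 1))/2 + (\<Sum>G\<in>A. dev G)/2"
    by (simp add: sum.distrib sum_divide_distrib)
  finally have e1: "(\<Sum>W\<in>?P. opF n A W) = real (card A) * (real n * (real n - 1))/2 + (\<Sum>G\<in>A. dev G)/2" .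
  have "\<bar>\<Sum>G\<in>A. dev G\<bar> \<le> (\<Sum>G\<in>A. \<bar>dev G\<bar>)" by (rule sum_abs)
  also have "\<dots> \<le> (\<Sum>G\<in>?P. \<bar>dev G\<bar>)" using AE finite_edges by (intro sum_mono2) auto
  finally have e2: "\<bar>\<Sum>G\<in>A. dev G\<bar> \<le> (\<Sum>G\<in>?P. \<bar>dev G\<bar>)" .
  have dev2: "(\<Sum>G\<in>?P. (dev G)^2) \<le> K * (2 * real n^2)"
  proof -
    have "(\<Sum>G\<in>?P. (dev G)^2) = (\<Sum>G\<in>?P. \<Sum>a\<in>?V. \<Sum>a'\<in>?V. \<Sum>c\<in>?V. \<Sum>c'\<in>?V. sg G a c * sg G a' c')"
      unfolding dev_def power2_eq_square by (simp add: sum_product)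
    also have "\<dots> = (\<Sum>a\<in>?V. \<Sum>a'\<in>?V. \<Sum>c\<in>?V. \<Sum>c'\<in>?V. \<Sum>G\<in>?P. sg G a c * sg G a' c')"
      by (simp add: sum.swap[of _ ?P])
    also have "\<dots> \<le> (\<Sum>a\<in>?V. \<Sum>a'\<in>?V. \<Sum>c\<in>?V. \<Sum>c'\<in>?V. K * (ind (a' = a) * ind (c' = c) + ind (a' = c) * ind (c' = a)))"
    proof (intro sum_mono)
      fix a a' c c' assume V: "a \<in> ?V" "a' \<in> ?V" "c \<in> ?V" "c' \<in> ?V"
      show "(\<Sum>G\<in>?P. sg G a c * sg G a' c') \<le> K * (ind (a' = a) * ind (c' = c) + ind (a' = c) * ind (c' = a))"
      proof (cases "{a,c} = {a',c'}")
        case True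
        hence "(a' = a \<and> c' = c) \<or> (a' = c \<and> c' = a)" by (auto simp: doubleton_eq_iff)
        hence "1 \<le> ind (a' = a) * ind (c' = c) + ind (a' = c) * ind (c' = a)" by (auto simp: ind_def)
        moreover have "(\<Sum>G\<in>?P. sg G a c * sg G a' c') \<le> (\<Sum>G\<in>?P. 1)"
        proof (intro sum_mono)
          fix G
          have "\<bar>sg G a c * sg G a' c'\<bar> \<le> 1" unfolding abs_mult using sg_abs[of G] by (intro mult_le_one) auto
          thus "sg G a c * sg G a' c' \<le> 1" by simp
        qed
        moreover have "K \<ge> 0" unfolding K_def by simp
        moreover have "(\<Sum>G\<in>?P. (1::real)) = K" using cP by simp
        ultimately have "(\<Sum>G\<in>?P. sg G a c * sg G a' c') \<le> K * 1" by simp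
        also have "K * 1 \<le> K * (ind (a' = a) * ind (c' = c) + ind (a' = c) * ind (c' = a))"
          using \<open>K \<ge> 0\<close> \<open>1 \<le> _\<close> by (intro mult_left_mono) auto
        finally show ?thesis .
      next
        case False
        hence "(\<Sum>G\<in>?P. sg G a c * sg G a' c') = 0" using two[OF V(1,3,2,4)] by simp
        moreover have "K \<ge> 0" unfolding K_def by simp
        ultimately show ?thesis by (simp add: ind_def)
      qed
    qed
    also have "\<dots> = K * (2 * real n^2)"
    proof -
      have t: "(\<Sum>c'\<in>?V. K * (ind (a' = a) * ind (c' = c) + ind (a' = c) * ind (c' = a))) = K * (ind (a' = a) + ind (a' = c))"
        if "a \<in> ?V" "c \<in> ?V" for a a' c
      proof -
        have "(\<Sum>c'\<in>?V. K * (ind (a' = a) * ind (c' = c) + ind (a' = c) * ind (c' = a)))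
          = K * (ind (a' = a) * (\<Sum>c'\<in>?V. ind (c' = c)) + ind (a' = c) * (\<Sum>c'\<in>?V. ind (c' = a)))"
          by (simp add: sum.distrib sum_distrib_left distrib_left mult_ac)
        thus ?thesis using sum_ind_eq2[OF that(1)] sum_ind_eq2[OF that(2)] by simp
      qed
      have t2: "(\<Sum>a'\<in>?V. \<Sum>c\<in>?V. \<Sum>c'\<in>?V. K * (ind (a' = a) * ind (c' = c) + ind (a' = c) * ind (c' = a))) = 2 * K * real n"
        if "a \<in> ?V" for a
      proof -
        have "(\<Sum>a'\<in>?V. \<Sum>c\<in>?V. \<Sum>c'\<in>?V. K * (ind (a' = a) * ind (c' = c) + ind (a' = c) * ind (c' = a)))
           = (\<Sum>a'\<in>?V. \<Sum>c\<in>?V. K * (ind (a' = a) + ind (a' = c)))"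
          by (rule sum.cong[OF refl], rule sum.cong[OF refl], rule t[OF that]) auto
        also have "\<dots> = (\<Sum>c\<in>?V. \<Sum>a'\<in>?V. K * (ind (a' = a) + ind (a' = c)))" by (rule sum.swap)
        also have "\<dots> = (\<Sum>c\<in>?V. K * ((\<Sum>a'\<in>?V. ind (a' = a)) + (\<Sum>a'\<in>?V. ind (a' = c))))"
          by (rule sum.cong[OF refl]) (simp add: sum.distrib sum_distrib_left distrib_left)
        also have "\<dots> = (\<Sum>c\<in>?V. 2 * K)"
        proof (rule sum.cong[OF refl])
          fix c assume "c \<in> ?V"
          thus "K * ((\<Sum>a'\<in>?V. ind (a' = a)) + (\<Sum>a'\<in>?V. ind (a' = c))) = 2 * K"
            using sum_ind_eq2[OF that] sum_ind_eq2[of c ?V] by simp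
        qed
        finally show ?thesis by simp
      qed
      have "(\<Sum>a\<in>?V. \<Sum>a'\<in>?V. \<Sum>c\<in>?V. \<Sum>c'\<in>?V. K * (ind (a' = a) * ind (c' = c) + ind (a' = c) * ind (c' = a)))
         = (\<Sum>a\<in>?V. 2 * K * real n)" by (rule sum.cong[OF refl], rule t2) auto
      thus ?thesis by (simp add: power2_eq_square)
    qed
    finally show ?thesis .
  qed
  have "(\<Sum>G\<in>?P. \<bar>dev G\<bar>)^2 \<le> (\<Sum>G\<in>?P. \<bar>dev G\<bar>^2) * card ?P"
    by (rule sum_squared_le_sum_of_squares)
  also have "\<dots> = (\<Sum>G\<in>?P. (dev G)^2) * K" using cP by simp
  also have "\<dots> \<le> (K * (2 * real n^2)) * K" using dev2 unfolding K_def by (intro mult_right_mono) auto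
  also have "\<dots> \<le> (2 * real n * K)^2"
  proof -
    have "K \<ge> 0" unfolding K_def by simp
    hence "0 \<le> K * (K * (real n * real n))" by simp
    thus ?thesis by (simp add: power2_eq_square)
  qed
  finally have "(\<Sum>G\<in>?P. \<bar>dev G\<bar>)^2 \<le> (2 * real n * K)^2" .
  hence "(\<Sum>G\<in>?P. \<bar>dev G\<bar>) \<le> 2 * real n * K"
    by (rule power2_le_imp_le) (simp add: K_def)
  hence d3: "(\<Sum>G\<in>?P. \<bar>dev G\<bar>) \<le> 2 * (K * real n)" by (simp add: mult_ac)
  have "- (\<Sum>G\<in>A. dev G) \<le> \<bar>\<Sum>G\<in>A. dev G\<bar>" by simp
  hence "(\<Sum>W\<in>?P. opF n A W) \<ge> real (card A) * (real n * (real n - 1))/2 - K * real n"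
    using e1 e2 d3 by linarith
  thus ?thesis unfolding K_def .
qed

lemma pairs4:
  assumes "distinct [i,j,k,l]"
  shows "pairs {i,j,k,l} = {{i,j},{i,k},{i,l},{j,k},{j,l},{k,l}}"
proof
  show "pairs {i,j,k,l} \<subseteq> {{i,j},{i,k},{i,l},{j,k},{j,l},{k,l}}"
  proof
    fix e assume "e \<in> pairs {i,j,k,l}"
    then obtain x y where e: "e = {x,y}" "x \<noteq> y" and xy: "x \<in> {i,j,k,l}" "y \<in> {i,j,k,l}"
      unfolding pairs_def by (auto simp: card_2_iff)
    show "e \<in> {{i,j},{i,k},{i,l},{j,k},{j,l},{k,l}}" using xy e by (auto simp: insert_commute)
  qed
  show "{{i,j},{i,k},{i,l},{j,k},{j,l},{k,l}} \<subseteq> pairs {i,j,k,l}"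
    using assms unfolding pairs_def by auto
qed

lemma card_pairs4:
  assumes "distinct [i,j,k,l]"
  shows "card (pairs {i,j,k,l}) = 6"
proof -
  have "card {i,j,k,l} = 4" using assms by simp
  hence "card (pairs {i,j,k,l}) = 4 choose 2" unfolding pairs_def using n_subsets[of "{i,j,k,l}" 2] by simp
  thus ?thesis by (simp add: choose_two)
qed

lemma pairs_sub_edges: "U \<subseteq> {1..n} \<Longrightarrow> pairs U \<subseteq> edges n"
  unfolding pairs_def edges_def by auto

definition Gam :: "nat \<Rightarrow> nat set set set \<Rightarrow> nat \<Rightarrow> nat \<Rightarrow> nat \<Rightarrow> nat \<Rightarrow> nat" where
  "Gam n A a b c d = card {W\<in>Pow (edges n). Good A W a b c d}"

lemma unif_Gam:
  assumes d: "distinct [i,j,k,l]" and V: "{i,j,k,l} \<subseteq> {1..n}"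
  shows "unif_prob (edges n - pairs {i, j, k, l})
                (\<lambda>W. insert {i, k} W \<in> A \<and> insert {i, l} W \<in> A \<and>
                     insert {j, k} W \<in> A \<and> insert {j, l} W \<in> A)
       = 64 * real (Gam n A i j k l) / 2 ^ card (edges n)"
proof -
  let ?E = "edges n"
  have sets: "{W. W \<subseteq> ?E - pairs {i,j,k,l} \<and> (insert {i, k} W \<in> A \<and> insert {i, l} W \<in> A \<and>
                     insert {j, k} W \<in> A \<and> insert {j, l} W \<in> A)} = {W\<in>Pow ?E. Good A W i j k l}"
    unfolding pairs4[OF d] Good_def nonE_def inF_def using d by auto
  have ps: "pairs {i,j,k,l} \<subseteq> ?E" by (rule pairs_sub_edges[OF V])
  have cE: "card (?E - pairs {i,j,k,l}) = card ?E - 6"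
    using card_Diff_subset[OF finite_subset[OF ps finite_edges] ps] card_pairs4[OF d] by simp
  have c6: "card ?E \<ge> 6" using card_mono[OF finite_edges ps] card_pairs4[OF d] by simp
  have "(2::real) ^ card ?E = 2^((card ?E - 6) + 6)" using c6 by simp
  also have "\<dots> = 2^(card ?E - 6) * 2^6" by (rule power_add)
  finally have "(2::real) ^ card ?E = 2^(card ?E - 6) * 2^6" .
  thus ?thesis unfolding unif_prob_def sets cE Gam_def by simp
qed

lemma Phi_mem:
  assumes inj: "inj_on \<pi> {1..n}" and W: "W \<subseteq> edges n" and xy: "x \<in> {1..n}" "y \<in> {1..n}"
  shows "{\<pi> x, \<pi> y} \<in> (\<lambda>e. \<pi> ` e) ` W \<longleftrightarrow> {x,y} \<in> W"
proof
  assume "{\<pi> x, \<pi> y} \<in> (\<lambda>e. \<pi> ` e) ` W"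
  then obtain e where e: "e \<in> W" "{\<pi> x, \<pi> y} = \<pi> ` e" by (rule imageE)
  have e2: "\<pi> ` e = \<pi> ` {x,y}" using e(2) by simp
  have "e \<in> Pow {1..n}" using W e(1) unfolding edges_def by auto
  moreover have "{x,y} \<in> Pow {1..n}" using xy by auto
  ultimately have "e = {x,y}" using inj_onD[OF inj_on_image_Pow[OF inj] e2] by blast
  thus "{x,y} \<in> W" using e(1) by simp
next
  assume "{x,y} \<in> W"
  moreover have "{\<pi> x, \<pi> y} = \<pi> ` {x,y}" by simp
  ultimately show "{\<pi> x, \<pi> y} \<in> (\<lambda>e. \<pi> ` e) ` W" by (rule rev_image_eqI)
qed

lemma sym_le:
  assumes iso: "iso_invariant n A" and bij: "bij_betw \<pi> {1..n} {1..n}"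
    and V: "a \<in> {1..n}" "b \<in> {1..n}" "c \<in> {1..n}" "d \<in> {1..n}"
  shows "Gam n A a b c d \<le> Gam n A (\<pi> a) (\<pi> b) (\<pi> c) (\<pi> d)"
proof -
  let ?E = "edges n" and ?V = "{1..n}"
  define Phi where "Phi W = (\<lambda>e. \<pi> ` e) ` W" for W :: "nat set set"
  have inj: "inj_on \<pi> ?V" using bij bij_betw_def by blast
  have piV: "\<pi> x \<in> ?V" if "x \<in> ?V" for x using bij that bij_betwE by blast
  have EV: "?E \<subseteq> Pow ?V" unfolding edges_def by auto
  have injPhi: "inj_on Phi (Pow ?E)"
  proof -
    have "inj_on (image \<pi>) ?E" using inj_on_image_Pow[OF inj] EV inj_on_subset by blast
    thus ?thesis unfolding Phi_def using inj_on_image_Pow by blast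
  qed
  have PhiE: "Phi W \<subseteq> ?E" if "W \<subseteq> ?E" for W
  proof
    fix e' assume "e' \<in> Phi W"
    then obtain e where e: "e \<in> W" "e' = \<pi> ` e" unfolding Phi_def by auto
    have "e \<in> ?E" using that e by auto
    hence eV: "e \<subseteq> ?V" "card e = 2" unfolding edges_def by auto
    then obtain u v where uv0: "e = {u,v}" "u \<noteq> v" by (meson card_2_iff)
    hence uv: "e = {u,v}" "u \<noteq> v" "u \<in> ?V" "v \<in> ?V" using eV by auto
    have "\<pi> u \<noteq> \<pi> v" using inj uv unfolding inj_on_def by blast
    thus "e' \<in> ?E" using e uv piV by (simp add: pair_in_edges)
  qed
  have ne: "\<pi> x \<noteq> \<pi> y \<longleftrightarrow> x \<noteq> y" if "x \<in> ?V" "y \<in> ?V" for x y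
    using inj that unfolding inj_on_def by blast
  have nonE': "nonE (Phi W) (\<pi> x) (\<pi> y) \<longleftrightarrow> nonE W x y" if "W \<subseteq> ?E" "x \<in> ?V" "y \<in> ?V" for W x y
    unfolding nonE_def Phi_def using Phi_mem[OF inj that] ne[OF that(2,3)] by simp
  have inF': "inF A (Phi W) (\<pi> x) (\<pi> y) \<longleftrightarrow> inF A W x y" if "W \<subseteq> ?E" "x \<in> ?V" "y \<in> ?V" for W x y
  proof (cases "x = y")
    case True thus ?thesis by (simp add: inF_def)
  next
    case False
    have ins: "insert {\<pi> x, \<pi> y} (Phi W) = Phi (insert {x,y} W)" unfolding Phi_def by simp
    have sub: "insert {x,y} W \<subseteq> ?E" using that False by (simp add: pair_in_edges)
    have isoA: "Phi (insert {x,y} W) \<in> A \<longleftrightarrow> insert {x,y} W \<in> A"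
      using iso[unfolded iso_invariant_def, rule_format, OF bij sub] unfolding Phi_def by simp
    have m: "{\<pi> x, \<pi> y} \<in> Phi W \<longleftrightarrow> {x,y} \<in> W" unfolding Phi_def by (rule Phi_mem[OF inj that])
    have n1: "\<pi> x \<noteq> \<pi> y" using ne[OF that(2,3)] False by simp
    show ?thesis unfolding inF_def ins[symmetric] using m n1 False isoA ins by simp
  qed
  have sub: "Phi ` {W\<in>Pow ?E. Good A W a b c d} \<subseteq> {W\<in>Pow ?E. Good A W (\<pi> a) (\<pi> b) (\<pi> c) (\<pi> d)}"
  proof
    fix W' assume "W' \<in> Phi ` {W\<in>Pow ?E. Good A W a b c d}"
    then obtain W where W: "W \<subseteq> ?E" "Good A W a b c d" "W' = Phi W" by auto
    show "W' \<in> {W\<in>Pow ?E. Good A W (\<pi> a) (\<pi> b) (\<pi> c) (\<pi> d)}"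
      using W PhiE[OF W(1)] unfolding Good_def using nonE'[OF W(1)] inF'[OF W(1)] V by simp
  qed
  have ij: "inj_on Phi {W\<in>Pow ?E. Good A W a b c d}"
    by (rule inj_on_subset[OF injPhi]) blast
  have fP: "finite (Pow ?E)" using finite_edges by simp
  have fin: "finite {W\<in>Pow ?E. Good A W (\<pi> a) (\<pi> b) (\<pi> c) (\<pi> d)}"
    by (rule finite_subset[OF _ fP]) blast
  show ?thesis unfolding Gam_def by (rule card_inj_on_le[OF ij sub fin])
qed

lemma exists_perm:
  assumes fin: "finite V" and d: "distinct [a,b,c,d]" "distinct [a',b',c',d']"
    and S: "{a,b,c,d} \<subseteq> V" "{a',b',c',d'} \<subseteq> V"
  shows "\<exists>\<pi>. bij_betw \<pi> V V \<and> \<pi> a = a' \<and> \<pi> b = b' \<and> \<pi> c = c' \<and> \<pi> d = d'"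
proof -
  let ?S = "{a,b,c,d}" and ?S' = "{a',b',c',d'}"
  have "card (V - ?S) = card V - card ?S" using S fin by (simp add: card_Diff_subset finite_subset)
  moreover have "card (V - ?S') = card V - card ?S'" using S fin by (simp add: card_Diff_subset finite_subset)
  moreover have "card ?S = card ?S'" using d by simp
  ultimately obtain h where h: "bij_betw h (V - ?S) (V - ?S')"
    using finite_same_card_bij[of "V - ?S" "V - ?S'"] fin by auto
  define \<pi> where "\<pi> x = (if x = a then a' else if x = b then b' else if x = c then c' else if x = d then d' else h x)" for x
  have b1: "bij_betw \<pi> ?S ?S'"
  proof (rule bij_betw_imageI)
    show "inj_on \<pi> ?S" using d unfolding inj_on_def \<pi>_def by auto
    show "\<pi> ` ?S = ?S'" using d unfolding \<pi>_def by auto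
  qed
  have b2: "bij_betw \<pi> (V - ?S) (V - ?S')"
    using h by (rule bij_betw_cong[THEN iffD1, rotated]) (auto simp: \<pi>_def)
  have "bij_betw \<pi> (?S \<union> (V - ?S)) (?S' \<union> (V - ?S'))" by (rule bij_betw_combine[OF b1 b2]) auto
  moreover have "?S \<union> (V - ?S) = V" "?S' \<union> (V - ?S') = V" using S by auto
  ultimately have bV: "bij_betw \<pi> V V" by simp
  have "\<pi> a = a'" "\<pi> b = b'" "\<pi> c = c'" "\<pi> d = d'" using d by (auto simp: \<pi>_def)
  with bV show ?thesis by blast
qed

lemma Gam_eq:
  assumes iso: "iso_invariant n A" and d: "distinct [a,b,c,d]" "distinct [a',b',c',d']"
    and S: "{a,b,c,d} \<subseteq> {1..n}" "{a',b',c',d'} \<subseteq> {1..n}"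
  shows "Gam n A a b c d = Gam n A a' b' c' d'"
proof -
  obtain \<pi> where p: "bij_betw \<pi> {1..n} {1..n}" "\<pi> a = a'" "\<pi> b = b'" "\<pi> c = c'" "\<pi> d = d'"
    using exists_perm[OF _ d S] by auto
  obtain \<sigma> where s: "bij_betw \<sigma> {1..n} {1..n}" "\<sigma> a' = a" "\<sigma> b' = b" "\<sigma> c' = c" "\<sigma> d' = d"
    using exists_perm[OF _ d(2) d(1) S(2) S(1)] by auto
  have "Gam n A a b c d \<le> Gam n A a' b' c' d'" using sym_le[OF iso p(1), of a b c d] S p by auto
  moreover have "Gam n A a' b' c' d' \<le> Gam n A a b c d" using sym_le[OF iso s(1), of a' b' c' d'] S s by auto
  ultimately show ?thesis by simp
qed

lemma Gam_zero: "\<not> distinct [a,b,c,d] \<Longrightarrow> Gam n A a b c d = 0"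
  unfolding Gam_def Good_def nonE_def inF_def by auto

lemma TT_sum:
  assumes iso: "iso_invariant n A" and n4: "n \<ge> 4"
  shows "(\<Sum>W\<in>Pow (edges n). TT n A W) \<le> real n^4 * real (Gam n A 1 2 3 4)"
proof -
  let ?V = "{1..n}" and ?P = "Pow (edges n)"
  have "(\<Sum>W\<in>?P. TT n A W) = (\<Sum>a\<in>?V. \<Sum>b\<in>?V. \<Sum>c\<in>?V. \<Sum>d\<in>?V. \<Sum>W\<in>?P. ind (Good A W a b c d))"
    unfolding TT_def by (simp add: sum.swap[of _ ?P])
  also have "\<dots> = (\<Sum>a\<in>?V. \<Sum>b\<in>?V. \<Sum>c\<in>?V. \<Sum>d\<in>?V. real (Gam n A a b c d))"
    unfolding Gam_def using finite_edges by (simp add: card_filter_ind')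
  also have "\<dots> \<le> (\<Sum>a\<in>?V. \<Sum>b\<in>?V. \<Sum>c\<in>?V. \<Sum>d\<in>?V. real (Gam n A 1 2 3 4))"
  proof (intro sum_mono)
    fix a b c d assume V: "a \<in> ?V" "b \<in> ?V" "c \<in> ?V" "d \<in> ?V"
    show "real (Gam n A a b c d) \<le> real (Gam n A 1 2 3 4)"
    proof (cases "distinct [a,b,c,d]")
      case True
      have "Gam n A a b c d = Gam n A 1 2 3 4"
        by (rule Gam_eq[OF iso True]) (use V n4 in auto)
      thus ?thesis by simp
    next
      case False thus ?thesis by (simp add: Gam_zero)
    qed
  qed
  also have "\<dots> = real n^4 * real (Gam n A 1 2 3 4)" by (simp add: power4_eq_xxxx)
  finally show ?thesis .
qed

lemma jensen4:
  fixes y :: "'a \<Rightarrow> real"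
  assumes "finite P"
  shows "(\<Sum>W\<in>P. y W)^4 \<le> real (card P)^3 * (\<Sum>W\<in>P. (y W)^4)"
proof -
  let ?K = "real (card P)"
  have K0: "?K \<ge> 0" by simp
  have a: "(\<Sum>W\<in>P. y W)^2 \<le> (\<Sum>W\<in>P. (y W)^2) * ?K" by (rule sum_squared_le_sum_of_squares)
  have b: "(\<Sum>W\<in>P. (y W)^2)^2 \<le> (\<Sum>W\<in>P. ((y W)^2)^2) * ?K" by (rule sum_squared_le_sum_of_squares)
  have "(\<Sum>W\<in>P. y W)^4 = ((\<Sum>W\<in>P. y W)^2)^2" by simp
  also have "\<dots> \<le> ((\<Sum>W\<in>P. (y W)^2) * ?K)^2" using a by (intro power_mono) auto
  also have "\<dots> = (\<Sum>W\<in>P. (y W)^2)^2 * ?K^2" by (simp add: power_mult_distrib)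
  also have "\<dots> \<le> ((\<Sum>W\<in>P. ((y W)^2)^2) * ?K) * ?K^2" using b by (intro mult_right_mono) auto
  also have "\<dots> = ?K^3 * (\<Sum>W\<in>P. (y W)^4)" by (simp add: power2_eq_square power3_eq_cube power4_eq_xxxx mult_ac)
  finally show ?thesis .
qed

lemma F1:
  fixes mu t n :: real
  assumes m: "0 \<le> mu" "mu \<le> 1" and n: "n \<ge> 2" and t: "t \<ge> 0" "t \<ge> mu/2 - 3/(2*n)"
  shows "16 * t^4 \<ge> mu^4 - 12/n"
proof (cases "mu/2 \<le> 3/(2*n)")
  case True
  hence "mu \<le> 3/n" using n by (simp add: field_simps)
  hence "mu^4 \<le> (3/n)^4" using m by (intro power_mono) auto
  also have "(3/n)^4 = 81/n^4" by (simp add: power_divide)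
  also have "81/n^4 \<le> 12/n"
  proof -
    have "n^3 \<ge> 2^3" using n by (intro power_mono) auto
    hence "81 \<le> 12 * n^3" by simp
    hence "81 * n \<le> (12 * n^3) * n" using n by (intro mult_right_mono) auto
    hence "81 * n \<le> 12 * n^4" by (simp add: power3_eq_cube power4_eq_xxxx mult_ac)
    thus ?thesis using n by (simp add: field_simps)
  qed
  finally have "mu^4 - 12/n \<le> 0" by simp
  moreover have "16 * t^4 \<ge> 0" using t by simp
  ultimately show ?thesis by linarith
next
  case False
  define m where "m = mu/2"
  define h where "h = 3/(2*n)"
  have hm: "0 \<le> h" "h \<le> m" using False n unfolding m_def h_def by auto
  have "m - h \<le> t" using t unfolding m_def h_def by simp
  hence "(m - h)^4 \<le> t^4" using hm by (intro power_mono) auto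
  moreover have "m^4 - 4*h*m^3 \<le> (m-h)^4"
  proof -
    have "m^4 - (m-h)^4 = h * (m^3 + m^2*(m-h) + m*(m-h)^2 + (m-h)^3)"
      by (simp add: power2_eq_square power3_eq_cube power4_eq_xxxx algebra_simps)
    moreover have "m^3 + m^2*(m-h) + m*(m-h)^2 + (m-h)^3 \<le> 4*m^3"
    proof -
      have "m - h \<le> m" "0 \<le> m - h" using hm by auto
      hence "m^2*(m-h) \<le> m^2*m" "m*(m-h)^2 \<le> m*m^2" "(m-h)^3 \<le> m^3"
        by (auto intro!: mult_left_mono power_mono)
      thus ?thesis by (simp add: power2_eq_square power3_eq_cube)
    qed
    ultimately have "m^4 - (m-h)^4 \<le> h * (4*m^3)" using hm by (metis mult_left_mono)
    thus ?thesis by (simp add: algebra_simps)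
  qed
  ultimately have "16*t^4 \<ge> 16*m^4 - 64*h*m^3" by linarith
  moreover have "16*m^4 = mu^4" unfolding m_def by (simp add: power_divide)
  moreover have "64*h*m^3 = 12 * mu^3 / n" unfolding m_def h_def using n by (simp add: power_divide field_simps)
  moreover have "12 * mu^3 / n \<le> 12 / n"
  proof -
    have "mu^3 \<le> 1" using m by (simp add: power_le_one)
    thus ?thesis using n by (simp add: divide_right_mono)
  qed
  ultimately show ?thesis by linarith
qed


lemma F23:
  fixes n :: real
  assumes n: "n \<ge> 2^32"
  shows "92/n + 100/sqrt (sqrt n) \<le> 21 * sqrt 2 / sqrt (log 2 n)"
proof -
  define r where "r = sqrt (sqrt n)"
  have "(2::real)^32 > 0" by simp
  hence n0: "n > 0" using n by linarith
  have s16: "sqrt ((2::real)^32) = 2^16"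
  proof -
    have "(2::real)^32 = (2^16)^2" by simp
    thus ?thesis by (simp only: real_sqrt_abs) simp
  qed
  have s8: "sqrt ((2::real)^16) = 2^8"
  proof -
    have "(2::real)^16 = (2^8)^2" by simp
    thus ?thesis by (simp only: real_sqrt_abs) simp
  qed
  have "sqrt n \<ge> 2^16" using real_sqrt_le_mono[OF n] s16 by simp
  hence r256: "r \<ge> 256" unfolding r_def using real_sqrt_le_mono[of "2^16" "sqrt n"] s8 by simp
  have r4: "r^4 = n"
  proof -
    have "r^4 = (r^2)^2" by simp
    also have "r^2 = sqrt n" unfolding r_def using n0 by simp
    also have "(sqrt n)^2 = n" using n0 by simp
    finally show ?thesis .
  qed
  have r0: "r > 0" using r256 by simp
  have t1: "92/n \<le> 1/r"
  proof -
    have "r^3 \<ge> 256^3" using r256 by (intro power_mono) auto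
    hence "92 \<le> r^3" by simp
    hence "92 * r \<le> r^3 * r" using r0 by (intro mult_right_mono) auto
    hence "92 * r \<le> n" unfolding r4[symmetric] by (simp add: power3_eq_cube power4_eq_xxxx mult_ac)
    thus ?thesis using r0 n0 by (simp add: field_simps)
  qed
  have lnn: "ln n = 4 * ln r" unfolding r4[symmetric] using r0 by (simp add: ln_realpow)
  have lnr: "ln r \<le> r - 1" using r0 by (rule ln_le_minus_one)
  have ln2: "1/2 \<le> ln (2::real)"
  proof -
    have "ln (1/2::real) \<le> 1/2 - 1" by (rule ln_le_minus_one) simp
    moreover have "ln (1/2::real) = - ln 2" by (simp add: ln_div)
    ultimately show ?thesis by simp
  qed
  define L where "L = log 2 n"
  have Ldef: "L = ln n / ln 2" unfolding L_def log_def ..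
  have "(2::real)^32 > 1" by simp
  hence n1: "n > 1" using n by linarith
  have L0: "L > 0" unfolding Ldef using n1 ln2 by (intro divide_pos_pos) auto
  have L6: "L \<le> 8 * r"
  proof -
    have "ln n \<le> 4 * r" using lnn lnr by linarith
    hence "ln n / ln 2 \<le> (4*r) / ln 2" using ln2 by (intro divide_right_mono) auto
    also have "(4*r)/ln 2 \<le> (4*r)/(1/2)" using ln2 r0 by (intro divide_left_mono) auto
    finally show ?thesis unfolding Ldef by simp
  qed
  have key: "10201 * L \<le> 882 * r^2"
  proof -
    have "10201 * L \<le> 10201 * (8*r)" using L6 by simp
    also have "\<dots> \<le> (882 * r) * r"
    proof -
      have "81608 \<le> 882 * r" using r256 by linarith
      hence "81608 * r \<le> (882 * r) * r" using r0 by (intro mult_right_mono) auto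
      thus ?thesis by simp
    qed
    finally show ?thesis by (simp add: power2_eq_square mult_ac)
  qed
  have "sqrt (10201 * L) \<le> sqrt (882 * r^2)" using key by (rule real_sqrt_le_mono)
  moreover have "sqrt (10201 * L) = 101 * sqrt L"
    by (simp add: real_sqrt_mult)
  moreover have "sqrt (882 * r^2) = 21 * sqrt 2 * r"
  proof -
    have e: "882 * r^2 = 441 * (2 * r^2)" by simp
    have "sqrt (882 * r^2) = sqrt 441 * (sqrt 2 * sqrt (r^2))" unfolding e by (simp only: real_sqrt_mult)
    moreover have "sqrt (441::real) = 21"
      using real_sqrt_abs[of "21::real"] by simp
    ultimately show ?thesis using r0 by simp
  qed
  ultimately have k2: "101 * sqrt L \<le> 21 * sqrt 2 * r" by simp
  have sL: "sqrt L > 0" using L0 by simp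
  have t2: "101 / r \<le> 21 * sqrt 2 / sqrt L"
    using k2 sL r0 by (simp add: field_simps)
  have "92/n + 100/sqrt (sqrt n) \<le> 1/r + 100/r" using t1 unfolding r_def by simp
  also have "\<dots> = 101/r" by simp
  finally show ?thesis using t2 unfolding L_def by simp
qed

lemma main_bound:
  fixes n :: nat and A :: "nat set set set"
  assumes n: "n \<ge> 2^32" and AE: "A \<subseteq> Pow (edges n)" and iso: "iso_invariant n A"
  shows "64 * real (Gam n A 1 2 3 4) / 2^card (edges n) \<ge> mu n A ^ 4 - 92/real n - 100/sqrt (sqrt (real n))"
proof -
  let ?P = "Pow (edges n)" and ?V = "{1..n}"
  define K where "K = (2::real)^card (edges n)"
  have K0: "K > 0" unfolding K_def by simp
  have cP: "real (card ?P) = K" unfolding K_def using finite_edges by (simp add: card_Pow)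
  have finP: "finite ?P" using finite_edges by simp
  have n1: "n \<ge> 1" "n \<ge> 4" using n by (auto intro: order_trans[rotated])
  define N where "N = real n"
  have N0: "N > 0" "N \<ge> 4" unfolding N_def using n1 by auto
  define r where "r = sqrt (sqrt N)"
  have r0: "r > 0" unfolding r_def using N0 by simp
  have r4: "r^4 = N"
  proof -
    have "r^4 = (r^2)^2" by simp
    also have "r^2 = sqrt N" unfolding r_def using N0 by simp
    also have "(sqrt N)^2 = N" using N0 by simp
    finally show ?thesis .
  qed
  define lam where "lam = r^7"
  have lam0: "lam > 0" unfolding lam_def using r0 by simp
  define Dl where "Dl W = N/2 + (3*lam/4 + N^4 * Qs n W/(4*lam^3))/2" for W
  have Qs0: "Qs n W \<ge> 0" for W unfolding Qs_def by (intro sum_nonneg) auto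
  have Dl0: "Dl W \<ge> 0" for W unfolding Dl_def using N0 lam0 Qs0[of W] by (intro add_nonneg_nonneg divide_nonneg_nonneg mult_nonneg_nonneg) auto
  have pw: "TT n A W \<ge> opF n A W ^4/(4*N^4) - 5*N^2*Dl W/2" for W
  proof -
    have "\<And>X. X \<subseteq> ?V \<Longrightarrow> \<bar>neX W X - real (card X)^2/2\<bar> \<le> Dl W"
      unfolding Dl_def N_def by (rule disc[OF _ lam0])
    from perW[OF n1(1) Dl0 this] show ?thesis unfolding N_def .
  qed
  have ST: "(\<Sum>W\<in>?P. TT n A W) \<ge> (\<Sum>W\<in>?P. opF n A W ^4)/(4*N^4) - 5*N^2/2 * (\<Sum>W\<in>?P. Dl W)"
  proof -
    have "(\<Sum>W\<in>?P. TT n A W) \<ge> (\<Sum>W\<in>?P. opF n A W ^4/(4*N^4) - 5*N^2/2 * Dl W)"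
      using pw by (intro sum_mono) (simp add: mult.assoc)
    thus ?thesis by (simp add: sum_subtractf sum_divide_distrib sum_distrib_left)
  qed
  have SDl: "(\<Sum>W\<in>?P. Dl W) \<le> K * (N/2 + 5*r^7/8)"
  proof -
    have "(\<Sum>W\<in>?P. Dl W) = (\<Sum>W\<in>?P. (N/2 + 3*lam/8) + (N^4/(8*lam^3)) * Qs n W)"
      unfolding Dl_def by (intro sum.cong refl) (simp add: field_simps)
    also have "\<dots> = K * (N/2 + 3*lam/8) + (N^4/(8*lam^3)) * (\<Sum>W\<in>?P. Qs n W)"
      using cP by (simp add: sum.distrib sum_distrib_left)
    also have "\<dots> \<le> K * (N/2 + 3*lam/8) + (N^4/(8*lam^3)) * (K * (2 * N^3))"
      using Qs_avg[of n] N0 lam0 unfolding K_def N_def by (intro add_left_mono mult_left_mono) auto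
    also have "(N^4/(8*lam^3)) * (K * (2 * N^3)) = K * (lam/4)"
    proof -
      have N7: "N^7 = lam^4" unfolding lam_def r4[symmetric] power_mult[symmetric] by simp
      have p1: "N^4 * N^3 = N^7" unfolding power_add[symmetric] by simp
      have p2: "lam^3 * lam = lam^4" unfolding power_Suc2[symmetric] by simp
      have e1: "N^4 * (2 * N^3) = 2 * (lam^3 * lam)"
      proof -
        have "N^4 * (2 * N^3) = 2 * (N^4 * N^3)" by (simp only: mult.left_commute)
        thus ?thesis unfolding p1 N7 p2 .
      qed
      have "(N^4/(8*lam^3)) * (K * (2 * N^3)) = K * ((N^4 * (2 * N^3))/(8*lam^3))" by simp
      also have "\<dots> = K * ((2 * (lam^3 * lam))/(8*lam^3))" unfolding e1 ..
      also have "\<dots> = K * (lam/4)" using lam0 by simp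
      finally show ?thesis .
    qed
    finally show ?thesis unfolding lam_def by (simp add: algebra_simps)
  qed
  define mu0 where "mu0 = real (card A) / K"
  have AI: "A \<inter> Pow (edges n) = A" using AE by blast
  have mu_eq: "mu n A = mu0" unfolding mu_def mu0_def K_def AI by simp
  have mu01: "0 \<le> mu0" "mu0 \<le> 1"
  proof -
    have "card A \<le> card ?P" by (rule card_mono[OF finP AE])
    hence "real (card A) \<le> K" using cP by linarith
    thus "0 \<le> mu0" "mu0 \<le> 1" unfolding mu0_def using K0 by auto
  qed
  define s where "s = mu0 * (N * (N - 1))/2 - N"
  have Sop: "(\<Sum>W\<in>?P. opF n A W) \<ge> K * s"
  proof -
    have "real (card A) = K * mu0" unfolding mu0_def using K0 by simp
    thus ?thesis using opF_avg[OF AE] unfolding s_def K_def N_def by (simp add: algebra_simps)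
  qed
  have Sop0: "(\<Sum>W\<in>?P. opF n A W) \<ge> 0"
    unfolding opF_def by (intro sum_nonneg) (auto simp: ind_ge0)
  define s0 where "s0 = max s 0"
  have s00: "s0 \<ge> 0" "s0 \<ge> s" unfolding s0_def by auto
  have Sop1: "(\<Sum>W\<in>?P. opF n A W) \<ge> K * s0" unfolding s0_def using Sop Sop0 by (auto simp: max_def)
  have S4: "(\<Sum>W\<in>?P. opF n A W ^4) \<ge> K * s0^4"
  proof -
    have "(K*s0)^4 \<le> (\<Sum>W\<in>?P. opF n A W)^4" using Sop1 K0 s00 by (intro power_mono) auto
    also have "\<dots> \<le> K^3 * (\<Sum>W\<in>?P. opF n A W ^4)" using jensen4[OF finP, of "opF n A"] cP by simp
    finally have "K^3 * (K * s0^4) \<le> K^3 * (\<Sum>W\<in>?P. opF n A W ^4)" by (simp add: power_mult_distrib power4_eq_xxxx power3_eq_cube mult_ac)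
    thus ?thesis using K0 by simp
  qed
  define X where "X = s0^4/(4*N^4) - 5*N^2/2 * (N/2 + 5*r^7/8)"
  have TX: "(\<Sum>W\<in>?P. TT n A W) \<ge> K * X"
  proof -
    have "(\<Sum>W\<in>?P. opF n A W ^4)/(4*N^4) \<ge> K * s0^4/(4*N^4)" using S4 N0 by (intro divide_right_mono) auto
    moreover have "5*N^2/2 * (\<Sum>W\<in>?P. Dl W) \<le> 5*N^2/2 * (K * (N/2 + 5*r^7/8))" using SDl N0 by (intro mult_left_mono) auto
    ultimately show ?thesis using ST unfolding X_def by (simp add: algebra_simps)
  qed
  have TG: "(\<Sum>W\<in>?P. TT n A W) \<le> N^4 * real (Gam n A 1 2 3 4)" using TT_sum[OF iso n1(2)] unfolding N_def .
  have "K * X \<le> N^4 * real (Gam n A 1 2 3 4)" using TX TG by linarith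
  hence G1: "64 * real (Gam n A 1 2 3 4) / K \<ge> 64 * X / N^4"
    using K0 N0 by (simp add: field_simps)
  have X1: "64 * X / N^4 = 16 * (s0/N^2)^4 - 80/N - 100/r"
  proof -
    have a: "64 * (s0^4/(4*N^4)) / N^4 = 16 * (s0/N^2)^4"
    proof -
      have "(s0/N^2)^4 = s0^4 / (N^4 * N^4)" by (simp add: power_divide power_mult[symmetric] power_add[symmetric])
      thus ?thesis by simp
    qed
    have b: "64 * (5*N^2/2 * (N/2)) / N^4 = 80/N"
    proof -
      have e: "N^4 = N^2 * N * N" by (simp add: power2_eq_square power4_eq_xxxx)
      show ?thesis unfolding e using N0 by simp
    qed
    have c: "64 * (5*N^2/2 * (5*r^7/8)) / N^4 = 100/r"
    proof -
      have q1: "N^2 = r^8" unfolding r4[symmetric] power_mult[symmetric] by simp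
      have q2: "N^4 = r^8 * r^8" unfolding r4[symmetric] power_mult[symmetric] power_add[symmetric] by simp
      have q3: "r^8 = r^7 * r" unfolding power_Suc2[symmetric] by simp
      have e: "N^4 = N^2 * (r^7 * r)" unfolding q2 q1 q3 ..
      have "64 * (5*N^2/2 * (5*r^7/8)) / N^4 = (100 * (N^2 * r^7)) / (N^2 * (r^7 * r))" unfolding e by simp
      also have "\<dots> = 100 / r" using r0 N0 by simp
      finally show ?thesis .
    qed
    have "64 * X / N^4 = 64 * (s0^4/(4*N^4)) / N^4 - 64 * (5*N^2/2 * (N/2)) / N^4 - 64 * (5*N^2/2 * (5*r^7/8)) / N^4"
      unfolding X_def by (simp add: algebra_simps diff_divide_distrib add_divide_distrib)
    thus ?thesis using a b c by simp
  qed
  have tb: "s0/N^2 \<ge> mu0/2 - 3/(2*N)"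
  proof -
    have "s/N^2 = mu0/2 - mu0/(2*N) - 1/N" unfolding s_def using N0 by (simp add: field_simps power2_eq_square)
    moreover have "mu0/(2*N) \<le> 1/(2*N)" using mu01 N0 by (simp add: divide_right_mono)
    moreover have "s/N^2 \<le> s0/N^2" using s00 N0 by (simp add: divide_right_mono)
    moreover have "3/(2*N) = 1/(2*N) + 1/N" using N0 by (simp add: field_simps)
    ultimately show ?thesis by linarith
  qed
  have "16 * (s0/N^2)^4 \<ge> mu0^4 - 12/N"
    by (rule F1[OF mu01]) (use N0 s00 tb in auto)
  hence "64 * real (Gam n A 1 2 3 4) / K \<ge> mu0^4 - 92/N - 100/r" using G1 X1 by simp
  thus ?thesis unfolding mu_eq K_def N_def r_def .
qed

theorem proposition9p1:
  fixes n :: nat and A :: "nat set set set"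
  assumes "n \<ge> 2 ^ 32"
    and "A \<subseteq> Pow (edges n)"
    and "iso_invariant n A"
  shows "\<exists>\<gamma>::real. \<gamma> \<ge> 0 \<and>
           \<gamma> \<ge> mu n A ^ 4 - 21 * sqrt 2 / sqrt (log 2 (real n)) \<and>
           (\<forall>i j k l. 1 \<le> i \<and> i < j \<and> j < k \<and> k < l \<and> l \<le> n \<longrightarrow>
              unif_prob (edges n - pairs {i, j, k, l})
                (\<lambda>W. insert {i, k} W \<in> A \<and> insert {i, l} W \<in> A \<and>
                     insert {j, k} W \<in> A \<and> insert {j, l} W \<in> A) = \<gamma>)"
proof -
  have n4: "n \<ge> 4" using assms(1) by (auto intro: order_trans[rotated])
  have rn: "real n \<ge> 2^32"
  proof -
    have "real n \<ge> real (2^32)" using assms(1) by (simp only: of_nat_le_iff)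
    thus ?thesis by simp
  qed
  define \<gamma> where "\<gamma> = 64 * real (Gam n A 1 2 3 4) / 2 ^ card (edges n)"
  have g0: "\<gamma> \<ge> 0" unfolding \<gamma>_def by simp
  have g1: "\<gamma> \<ge> mu n A ^ 4 - 21 * sqrt 2 / sqrt (log 2 (real n))"
    using main_bound[OF assms] F23[OF rn] unfolding \<gamma>_def by linarith
  have g2: "unif_prob (edges n - pairs {i, j, k, l})
                (\<lambda>W. insert {i, k} W \<in> A \<and> insert {i, l} W \<in> A \<and>
                     insert {j, k} W \<in> A \<and> insert {j, l} W \<in> A) = \<gamma>"
    if "1 \<le> i \<and> i < j \<and> j < k \<and> k < l \<and> l \<le> n" for i j k l
  proof -
    have d: "distinct [i,j,k,l]" using that by auto
    have V: "{i,j,k,l} \<subseteq> {1..n}" using that by auto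
    have "Gam n A i j k l = Gam n A 1 2 3 4"
      by (rule Gam_eq[OF assms(3) d]) (use V n4 in auto)
    thus ?thesis unfolding unif_Gam[OF d V] \<gamma>_def by simp
  qed
  show ?thesis using g0 g1 g2 by blast
qed

end
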